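(* For fixed integers $n\ge m\ge 3$, the maximal $h$-vector $h_{max}$ of Perazzo algebras with invariants $n,m,d$ is not unimodal for all sufficiently large $d$.
   Context: $K$ algebraically closed of characteristic zero. A Perazzo form of degree $d$ is $F=X_0p_0+\dots+X_np_n+G\in K[X_0,\dots,X_n,U_1,\dots,U_m]_d$ with $p_i\in K[U_1,\dots,U_m]_{d-1}$ algebraically dependent but linearly independent, $G\in K[U_1,\dots,U_m]_d$. The maximal $h$-vector is $h_{max}=(h_0,\dots,h_d)$, symmetric, with $h_i=\min\{\alpha_i+\beta_i,\alpha_i+\gamma_i\}$ for $0\le i\le\lfloor d/2\rfloor$, where $\alpha_i=\binom{m+i-1}{m-1}$, $\beta_i=\binom{d+m-i-1}{m-1}$, $\gamma_i=(n+1)\binom{m+i-2}{m-1}$. Unimodal means $h_0\le\dots\le h_k\ge\dots\ge h_d$ for some $k$. *)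

theory Defs
  imports Main
begin

definition perazzo_alpha :: "nat \<Rightarrow> nat \<Rightarrow> nat" where
  "perazzo_alpha m i = (m + i - 1) choose (m - 1)"

definition perazzo_beta :: "nat \<Rightarrow> nat \<Rightarrow> nat \<Rightarrow> nat" where
  "perazzo_beta m d i = (d + m - i - 1) choose (m - 1)"

definition perazzo_gamma :: "nat \<Rightarrow> nat \<Rightarrow> nat \<Rightarrow> nat" where
  "perazzo_gamma n m i = (n + 1) * ((m + i - 2) choose (m - 1))"

definition hmax :: "nat \<Rightarrow> nat \<Rightarrow> nat \<Rightarrow> nat \<Rightarrow> nat" where
  "hmax n m d i =
     (let low = (\<lambda>j. min (perazzo_alpha m j + perazzo_beta m d j)
                          (perazzo_alpha m j + perazzo_gamma n m j))
      in if i \<le> d div 2 then low i else if i \<le> d then low (d - i) else 0)"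

definition unimodal :: "(nat \<Rightarrow> nat) \<Rightarrow> nat \<Rightarrow> bool" where
  "unimodal h d \<longleftrightarrow> (\<exists>k\<le>d. (\<forall>i j. i \<le> j \<and> j \<le> k \<longrightarrow> h i \<le> h j) \<and>
                              (\<forall>i j. k \<le> i \<and> i \<le> j \<and> j \<le> d \<longrightarrow> h j \<le> h i))"

end

theory Submission
  imports Defs
begin

lemma step5:
  assumes "5 * k \<le> Suc y"
  shows "4 * (Suc y choose k) \<le> 5 * (y choose k)"
proof -
  have e: "(Suc y - k) * (Suc y choose k) = Suc y * (y choose k)"
    using binomial_absorb_comp[of "Suc y" k] by simp
  have "4 * Suc y \<le> 5 * (Suc y - k)" using assms by simp
  hence "4 * Suc y * (Suc y choose k) \<le> 5 * (Suc y - k) * (Suc y choose k)"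
    by (rule mult_right_mono) simp
  also have "\<dots> = Suc y * (5 * (y choose k))" using e by (simp add: algebra_simps)
  finally have "Suc y * (4 * (Suc y choose k)) \<le> Suc y * (5 * (y choose k))"
    by (simp add: algebra_simps)
  thus ?thesis by (simp only: Suc_mult_le_cancel1)
qed

lemma step4:
  assumes "5 * k \<le> Suc y"
  shows "(y + 4 choose k) \<le> 4 * (y choose k)"
proof -
  have a: "4 * (Suc y choose k) \<le> 5 * (y choose k)" using step5 assms by blast
  have b: "4 * (Suc (Suc y) choose k) \<le> 5 * (Suc y choose k)" using step5[of k "Suc y"] assms by simp
  have c: "4 * (Suc (Suc (Suc y)) choose k) \<le> 5 * (Suc (Suc y) choose k)" using step5[of k "Suc (Suc y)"] assms by simp
  have d: "4 * (Suc (Suc (Suc (Suc y))) choose k) \<le> 5 * (Suc (Suc (Suc y)) choose k)" using step5[of k "Suc (Suc (Suc y))"] assms by simp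
  have "256 * (Suc (Suc (Suc (Suc y))) choose k) \<le> 625 * (y choose k)"
    using a b c d by linarith
  hence "256 * (Suc (Suc (Suc (Suc y))) choose k) \<le> 1024 * (y choose k)" by linarith
  thus ?thesis by (simp add: numeral_eq_Suc)
qed

lemma low_eq:
  "i \<le> d div 2 \<Longrightarrow> hmax n m d i = min (perazzo_alpha m i + perazzo_beta m d i)
                          (perazzo_alpha m i + perazzo_gamma n m i)"
  by (simp add: hmax_def)

lemma high_eq:
  "d div 2 < i \<Longrightarrow> i \<le> d \<Longrightarrow> hmax n m d i = hmax n m d (d - i)"
proof -
  assume a: "d div 2 < i" "i \<le> d"
  have "d - i \<le> d div 2" using a by arith
  then show ?thesis using a by (simp add: hmax_def Let_def)
qed

theorem theorem3p6:
  fixes n m :: nat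
  assumes "3 \<le> m" and "m \<le> n"
  shows "\<exists>D. \<forall>d\<ge>D. \<not> unimodal (hmax n m d) d"
proof -
  obtain r where mr: "m = r + 3" using assms(1) by (metis add.commute le_iff_add)
  show ?thesis
  proof (intro exI allI impI)
    fix d assume dD: "d \<ge> 2 * (4 * r + 10)"
    define t where "t = d div 2"
    define s where "s = t - 1"
    define e where "e = d - t"
    have ts: "t = Suc s" using dD unfolding s_def t_def by auto
    have s_big: "s \<ge> 4 * r + 9" using dD unfolding s_def t_def by auto
    have e1: "e \<ge> Suc s" "e \<le> s + 2" using ts unfolding e_def t_def by auto
    have de: "d = e + t" using e_def t_def by auto
    have sle: "s \<le> d div 2" using ts t_def by simp
    have As: "perazzo_alpha m s = (r + 2 + s) choose (r + 2)" by (simp add: perazzo_alpha_def mr)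
    have At: "perazzo_alpha m t = (r + 3 + s) choose (r + 2)" by (simp add: perazzo_alpha_def mr ts add_ac)
    have Bs: "perazzo_beta m d s = (e + r + 3) choose (r + 2)"
      by (simp add: perazzo_beta_def mr de ts add_ac)
    have Bt: "perazzo_beta m d t = (e + r + 2) choose (r + 2)"
      by (simp add: perazzo_beta_def mr de ts)
    have Gs: "perazzo_gamma n m s = (n + 1) * ((r + 1 + s) choose (r + 2))"
      by (simp add: perazzo_gamma_def mr)
    have eq1: "Suc (r + 2 + s) = r + 3 + s" and eq2: "Suc (r + 1) = r + 2"
      and eq3: "Suc (e + r + 2) = e + r + 3" and eq4: "Suc r = r + 1" by simp_all
    have i1: "(r + 3 + s) choose (r + 2) = ((r + 2 + s) choose (r + 2)) + ((r + 2 + s) choose (r + 1))"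
      using binomial_Suc_Suc[of "r + 2 + s" "r + 1"]
      by (simp only: eq1 eq2)
    have i2: "(e + r + 3) choose (r + 2) = ((e + r + 2) choose (r + 2)) + ((e + r + 2) choose (r + 1))"
      using binomial_Suc_Suc[of "e + r + 2" "r + 1"]
      by (simp only: eq3 eq2)
    have i3: "(r + 3 + s) choose (r + 1) = ((r + 2 + s) choose (r + 1)) + ((r + 2 + s) choose r)"
      using binomial_Suc_Suc[of "r + 2 + s" "r"]
      by (simp only: eq1 eq4)
    have i4: "(r + 2 + s) choose r > 0" by simp
    have i5: "(r + 3 + s) choose (r + 1) \<le> (e + r + 2) choose (r + 1)"
      by (rule binomial_right_mono) (use e1 in simp)
    have fdec: "perazzo_alpha m t + perazzo_beta m d t < perazzo_alpha m s + perazzo_beta m d s"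
      using As At Bs Bt i1 i2 i3 i4 i5 by linarith
    have b1: "(e + r + 3) choose (r + 2) \<le> ((r + 1 + s) + 4) choose (r + 2)"
      by (rule binomial_right_mono) (use e1 in simp)
    have b2: "((r + 1 + s) + 4) choose (r + 2) \<le> 4 * ((r + 1 + s) choose (r + 2))"
      by (rule step4) (use s_big in simp)
    have b3: "4 * ((r + 1 + s) choose (r + 2)) \<le> (n + 1) * ((r + 1 + s) choose (r + 2))"
      by (rule mult_right_mono) (use assms mr in simp_all)
    have BG: "perazzo_beta m d s \<le> perazzo_gamma n m s"
      using Bs Gs b1 b2 b3 by linarith
    have hs: "hmax n m d s = perazzo_alpha m s + perazzo_beta m d s"
      using low_eq[OF sle] BG by simp
    have ht: "hmax n m d t \<le> perazzo_alpha m t + perazzo_beta m d t"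
      using low_eq[of t d n m] t_def by simp
    have lt1: "hmax n m d t < hmax n m d s" using hs ht fdec by linarith
    define c where "c = d - s"
    have c1: "d div 2 < c" "c \<le> d" "t \<le> c" using de ts e1 t_def unfolding c_def by auto
    have hc: "hmax n m d c = hmax n m d s"
      using high_eq[OF c1(1) c1(2)] unfolding c_def using de ts by simp
    show "\<not> unimodal (hmax n m d) d"
    proof
      assume "unimodal (hmax n m d) d"
      then obtain k where k: "k \<le> d" "\<forall>i j. i \<le> j \<and> j \<le> k \<longrightarrow> hmax n m d i \<le> hmax n m d j"
        "\<forall>i j. k \<le> i \<and> i \<le> j \<and> j \<le> d \<longrightarrow> hmax n m d j \<le> hmax n m d i"
        unfolding unimodal_def by blast
      show False
      proof (cases "k \<le> t")
        case True
        then have "hmax n m d c \<le> hmax n m d t" using k(3) c1 by blast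
        then show False using hc lt1 by simp
      next
        case False
        then have "hmax n m d s \<le> hmax n m d t" using k(2) ts by simp
        then show False using lt1 by simp
      qed
    qed
  qed
qed

end
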